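(* If $n\ge4$, then $r^D_\alpha$ is odd for every pseudo-composition $\alpha$ of $n$; that is, $c^D_{2,0}(n)=0$ and $c^D_{2,1}(n)=2^n$.
   Context: A signed permutation of $[n]$ is a bijection $w$ of $\{\pm1,\ldots,\pm n\}$ with $w(-i)=-w(i)$; it is even if an even number of $w(1),\ldots,w(n)$ are negative; these form $\mathfrak{S}^D_n$. With $w(0):=-w(2)$, $D(w)=\{i\in\{0,\ldots,n-1\}: w(i)>w(i+1)\}$. A pseudo-composition of $n$ ($\alpha\models_0 n$) is a sequence $(\alpha_1,\ldots,\alpha_\ell)$ of integers with $\alpha_1\ge0$, $\alpha_2,\ldots,\alpha_\ell>0$ and sum $n$, with $D(\alpha)=\{\alpha_1,\alpha_1+\alpha_2,\ldots,\alpha_1+\cdots+\alpha_{\ell-1}\}$. Then $r^D_\alpha=|\{w\in\mathfrak{S}^D_n: D(w)=D(\alpha)\}|$ and $c^D_{p,i}(n)=|\{\alpha\models_0 n: r^D_\alpha\equiv i\pmod p\}|$; there are $2^n$ pseudo-compositions of $n$. *)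

theory Defs
  imports Main
begin

text \<open>Signed permutations of [n], represented as functions on the integers that
  are bijections of {-n..n}-{0} onto itself, odd (w(-i) = -w(i)), and the identity
  outside {-n..n} (so that the set of them is finite).\<close>
definition signed_perms :: "nat \<Rightarrow> (int \<Rightarrow> int) set" where
  "signed_perms n = {w. bij_betw w ({-int n..int n} - {0}) ({-int n..int n} - {0})
                        \<and> (\<forall>i. w (-i) = - w i)
                        \<and> (\<forall>i. \<bar>i\<bar> > int n \<longrightarrow> w i = i)}"

definition even_signed_perms :: "nat \<Rightarrow> (int \<Rightarrow> int) set" where
  "even_signed_perms n = {w \<in> signed_perms n. even (card {i \<in> {1..int n}. w i < 0})}"

definition wD :: "(int \<Rightarrow> int) \<Rightarrow> nat \<Rightarrow> int" where
  "wD w i = (if i = 0 then - w 2 else w (int i))"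

definition descD :: "nat \<Rightarrow> (int \<Rightarrow> int) \<Rightarrow> nat set" where
  "descD n w = {i \<in> {0..<n}. wD w i > wD w (Suc i)}"

definition pseudo_comp :: "nat \<Rightarrow> nat list \<Rightarrow> bool" where
  "pseudo_comp n \<alpha> \<longleftrightarrow> \<alpha> \<noteq> [] \<and> (\<forall>x \<in> set (tl \<alpha>). x > 0) \<and> sum_list \<alpha> = n"

definition desc_comp :: "nat list \<Rightarrow> nat set" where
  "desc_comp \<alpha> = {sum_list (take k \<alpha>) | k. 1 \<le> k \<and> k < length \<alpha>}"

definition rD :: "nat \<Rightarrow> nat list \<Rightarrow> nat" where
  "rD n \<alpha> = card {w \<in> even_signed_perms n. descD n w = desc_comp \<alpha>}"

definition cD :: "nat \<Rightarrow> nat \<Rightarrow> nat \<Rightarrow> nat" where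
  "cD p i n = card {\<alpha>. pseudo_comp n \<alpha> \<and> rD n \<alpha> mod p = i}"

end

theory Submission
  imports Defs "HOL-Library.FuncSet"
begin


lemma inv_parity:
  assumes "finite A" "\<forall>x\<in>A. f x \<in> A \<and> f (f x) = x"
  shows "card A mod 2 = card {x\<in>A. f x = x} mod 2"
  using assms
proof (induction "card A" arbitrary: A rule: less_induct)
  case less
  show ?case
  proof (cases "\<forall>x\<in>A. f x = x")
    case True
    then have "{x\<in>A. f x = x} = A" by auto
    then show ?thesis by simp
  next
    case False
    then obtain x where x: "x \<in> A" "f x \<noteq> x" by auto
    define A' where "A' = A - {x, f x}"
    have fx: "f x \<in> A" using less.prems x by auto
    have c: "card A' = card A - 2" unfolding A'_def using x fx less.prems
      by (simp add: card_Diff_subset)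
    have c2: "card A \<ge> 2" using x fx less.prems
    proof -
      have "{x, f x} \<subseteq> A" using x fx by auto
      then have "card {x, f x} \<le> card A" using less.prems by (simp add: card_mono)
      then show ?thesis using x by simp
    qed
    have inv: "\<forall>y\<in>A'. f y \<in> A' \<and> f (f y) = y"
      unfolding A'_def using less.prems x by (auto) (metis)
    have fA: "finite A'" using less.prems unfolding A'_def by auto
    have fixe: "{y\<in>A'. f y = y} = {y\<in>A. f y = y}" unfolding A'_def using x less.prems by auto
    have "card A' < card A" using c c2 by simp
    from less.hyps[OF this fA inv] have "card A' mod 2 = card {y\<in>A. f y = y} mod 2" using fixe by simp
    moreover have "card A = card A' + 2" using c c2 by simp
    ultimately show ?thesis by simp
  qed
qed


lemma card_symdiff_parity:
  assumes "finite A" "finite B"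
  shows "card ((A - B) \<union> (B - A)) mod 2 = (card A + card B) mod 2"
proof -
  have "card ((A - B) \<union> (B - A)) = card (A - B) + card (B - A)"
    using assms by (intro card_Un_disjoint) auto
  moreover have "card A = card (A \<inter> B) + card (A - B)" using assms card_Int_Diff by blast
  moreover have "card B = card (B \<inter> A) + card (B - A)" using assms card_Int_Diff by blast
  moreover have "B \<inter> A = A \<inter> B" by auto
  ultimately have "card A + card B = card ((A - B) \<union> (B - A)) + 2 * card (A \<inter> B)" by simp
  then show ?thesis by simp
qed

lemma spD:
  assumes "w \<in> signed_perms n"
  shows "bij_betw w ({-int n..int n} - {0}) ({-int n..int n} - {0})"
    "\<And>i. w (-i) = - w i" "\<And>i. \<bar>i\<bar> > int n \<Longrightarrow> w i = i"
  using assms unfolding signed_perms_def by auto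

lemma sp_zero: assumes "w \<in> signed_perms n" shows "w 0 = 0"
  using spD(2)[OF assms, of 0] by simp

lemma sp_mem:
  assumes "w \<in> signed_perms n" "i \<in> {-int n..int n} - {0}"
  shows "w i \<in> {-int n..int n} - {0}"
  using bij_betw_imp_surj_on[OF spD(1)[OF assms(1)]] assms(2) by blast

lemma sp_range:
  assumes "w \<in> signed_perms n" "1 \<le> i" "i \<le> int n"
  shows "1 \<le> \<bar>w i\<bar> \<and> \<bar>w i\<bar> \<le> int n"
  using sp_mem[OF assms(1), of i] assms by auto

lemma sp_absinj:
  assumes "w \<in> signed_perms n" "1 \<le> i" "i \<le> int n" "1 \<le> j" "j \<le> int n" "\<bar>w i\<bar> = \<bar>w j\<bar>"
  shows "i = j"
proof -
  have inj: "inj_on w ({-int n..int n} - {0})" using bij_betw_imp_inj_on[OF spD(1)[OF assms(1)]] .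
  have "w i = w j \<or> w i = w (-j)" using assms(6) spD(2)[OF assms(1), of j] by (auto simp: abs_if split: if_splits)
  then show ?thesis
  proof
    assume "w i = w j" then show ?thesis using inj assms(2-5) by (auto dest: inj_onD)
  next
    assume "w i = w (-j)"
    then have "i = -j" using inj assms(2-5) by (auto dest!: inj_onD)
    then show ?thesis using assms by simp
  qed
qed

lemma sp_abssurj:
  assumes "w \<in> signed_perms n" "1 \<le> v" "v \<le> int n"
  shows "\<exists>i. 1 \<le> i \<and> i \<le> int n \<and> \<bar>w i\<bar> = v"
proof -
  have "v \<in> {-int n..int n} - {0}" using assms by auto
  then have "v \<in> w ` ({-int n..int n} - {0})" using bij_betw_imp_surj_on[OF spD(1)[OF assms(1)]] by simp
  then obtain i where i: "i \<in> {-int n..int n} - {0}" "w i = v" by blast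
  show ?thesis
  proof (cases "i > 0")
    case True then show ?thesis using i assms(2) by (intro exI[of _ i]) auto
  next
    case False then show ?thesis using i assms(2) spD(2)[OF assms(1), of i] by (intro exI[of _ "-i"]) auto
  qed
qed

lemma sp_card_pre:
  assumes "w \<in> signed_perms n" "K \<subseteq> {1..int n}"
  shows "card {i\<in>{1..int n}. \<bar>w i\<bar> \<in> K} = card K"
proof -
  have "inj_on (\<lambda>i. \<bar>w i\<bar>) {i\<in>{1..int n}. \<bar>w i\<bar> \<in> K}"
    by (rule inj_onI) (use sp_absinj[OF assms(1)] in auto)
  moreover have "(\<lambda>i. \<bar>w i\<bar>) ` {i\<in>{1..int n}. \<bar>w i\<bar> \<in> K} = K"
  proof
    show "K \<subseteq> (\<lambda>i. \<bar>w i\<bar>) ` {i\<in>{1..int n}. \<bar>w i\<bar> \<in> K}"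
    proof
      fix v assume "v \<in> K"
      then obtain i where "1 \<le> i" "i \<le> int n" "\<bar>w i\<bar> = v" using sp_abssurj[OF assms(1)] assms(2) by fastforce
      then show "v \<in> (\<lambda>i. \<bar>w i\<bar>) ` {i\<in>{1..int n}. \<bar>w i\<bar> \<in> K}" using \<open>v \<in> K\<close> by force
    qed
  qed auto
  ultimately show ?thesis using card_image by fastforce
qed

lemma sp_ext:
  assumes "w \<in> signed_perms n" "w' \<in> signed_perms n" "\<And>i. 1 \<le> i \<Longrightarrow> i \<le> int n \<Longrightarrow> w i = w' i"
  shows "w = w'"
proof
  fix i
  consider "i = 0" | "\<bar>i\<bar> > int n" | "1 \<le> i \<and> i \<le> int n" | "1 \<le> -i \<and> -i \<le> int n" by linarith
  then show "w i = w' i"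
  proof cases
    case 1 then show ?thesis using sp_zero[OF assms(1)] sp_zero[OF assms(2)] by simp
  next
    case 2 then show ?thesis using spD(3)[OF assms(1)] spD(3)[OF assms(2)] by simp
  next
    case 3 then show ?thesis using assms by simp
  next
    case 4 then show ?thesis using assms(3)[of "-i"] spD(2)[OF assms(1), of "-i"] spD(2)[OF assms(2), of "-i"] by simp
  qed
qed

lemma comp_sp:
  assumes "w \<in> signed_perms n" "\<And>v. h (-v) = - h v"
    "\<And>v. v \<in> {-int n..int n} - {0} \<Longrightarrow> h v \<in> {-int n..int n} - {0} \<and> h (h v) = v"
    "\<And>v. \<bar>v\<bar> > int n \<Longrightarrow> h v = v"
  shows "(\<lambda>i. h (w i)) \<in> signed_perms n"
proof -
  have "bij_betw h ({-int n..int n} - {0}) ({-int n..int n} - {0})"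
    by (rule bij_betw_byWitness[where f'=h]) (use assms(3) in auto)
  from bij_betw_trans[OF spD(1)[OF assms(1)] this]
  have "bij_betw (\<lambda>i. h (w i)) ({-int n..int n} - {0}) ({-int n..int n} - {0})" by (simp add: o_def)
  then show ?thesis unfolding signed_perms_def using assms spD[OF assms(1)] by auto
qed

definition negs :: "nat \<Rightarrow> (int \<Rightarrow> int) \<Rightarrow> int set" where
  "negs n w = {i\<in>{1..int n}. w i < 0}"

lemma esp_iff: "w \<in> even_signed_perms n \<longleftrightarrow> w \<in> signed_perms n \<and> even (card (negs n w))"
  unfolding even_signed_perms_def negs_def by auto

lemma negs_flip:
  assumes "w \<in> signed_perms n" "\<And>i. 1 \<le> i \<Longrightarrow> i \<le> int n \<Longrightarrow> (h (w i) < 0) = ((w i < 0) \<noteq> (\<bar>w i\<bar> \<in> K))"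
    "K \<subseteq> {1..int n}"
  shows "card (negs n (\<lambda>i. h (w i))) mod 2 = (card (negs n w) + card K) mod 2"
proof -
  have "negs n (\<lambda>i. h (w i)) = (negs n w - {i\<in>{1..int n}. \<bar>w i\<bar> \<in> K}) \<union> ({i\<in>{1..int n}. \<bar>w i\<bar> \<in> K} - negs n w)"
    unfolding negs_def using assms(2) by auto
  moreover have "finite (negs n w)" "finite {i\<in>{1..int n}. \<bar>w i\<bar> \<in> K}" unfolding negs_def
    by (rule finite_subset[of _ "{1..int n}"]; auto)+
  ultimately show ?thesis using card_symdiff_parity[of "negs n w" "{i\<in>{1..int n}. \<bar>w i\<bar> \<in> K}"]
      sp_card_pre[OF assms(1,3)] by simp
qed


lemma sp_finite: "finite (signed_perms n)"
proof -
  let ?F = "\<lambda>g i. if i \<in> {-int n..int n} then g i else i"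
  have "signed_perms n \<subseteq> ?F ` (PiE {-int n..int n} (\<lambda>_. {-int n..int n}))"
  proof
    fix w assume w: "w \<in> signed_perms n"
    have "w = ?F (restrict w {-int n..int n})"
      using spD(3)[OF w] by (auto simp: fun_eq_iff restrict_def)
    moreover have "restrict w {-int n..int n} \<in> PiE {-int n..int n} (\<lambda>_. {-int n..int n})"
    proof -
      have "w i \<in> {-int n..int n}" if "i \<in> {-int n..int n}" for i
        using sp_mem[OF w, of i] sp_zero[OF w] that by (cases "i = 0") auto
      then show ?thesis by auto
    qed
    ultimately show "w \<in> ?F ` (PiE {-int n..int n} (\<lambda>_. {-int n..int n}))" by blast
  qed
  moreover have "finite (PiE {-int n..int n} (\<lambda>_. {-int n..int n}))" by (rule finite_PiE) auto
  ultimately show ?thesis using finite_subset by blast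
qed

lemma esp_finite: "finite (even_signed_perms n)"
  using sp_finite[of n] unfolding even_signed_perms_def by auto

definition validk :: "nat \<Rightarrow> (int \<Rightarrow> int) \<Rightarrow> int \<Rightarrow> bool" where
  "validk n w k \<longleftrightarrow> 2 \<le> k \<and> k \<le> int n \<and> (\<forall>i. 1 \<le> i \<and> i < int n \<longrightarrow> max \<bar>w i\<bar> \<bar>w (i+1)\<bar> \<noteq> k)"

definition VS :: "nat \<Rightarrow> (int \<Rightarrow> int) \<Rightarrow> int set" where
  "VS n w = {k. validk n w k}"

definition gK :: "int set \<Rightarrow> int \<Rightarrow> int" where
  "gK K v = (if \<bar>v\<bar> \<in> K then - v else v)"

definition Tm :: "nat \<Rightarrow> (int \<Rightarrow> int) \<Rightarrow> (int \<Rightarrow> int)" where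
  "Tm n w = (if VS n w = {} then w else (\<lambda>i. gK {1, Min (VS n w)} (w i)))"

lemma gK_abs[simp]: "\<bar>gK K v\<bar> = \<bar>v\<bar>" by (simp add: gK_def)
lemma gK_odd: "gK K (-v) = - gK K v" by (simp add: gK_def)
lemma gK_inv[simp]: "gK K (gK K v) = v" by (simp add: gK_def)

lemma VS_gK: "VS n (\<lambda>i. gK K (w i)) = VS n w"
  unfolding VS_def validk_def by simp

lemma VS_finite: "finite (VS n w)"
  by (rule finite_subset[of _ "{2..int n}"]) (auto simp: VS_def validk_def)

lemma key_cmp:
  assumes "\<bar>x\<bar> \<noteq> \<bar>y\<bar>" "max \<bar>x\<bar> \<bar>y\<bar> \<notin> K"
  shows "(gK K x > gK K y) = (x > y)"
  using assms unfolding gK_def by (cases "\<bar>x\<bar> < \<bar>y\<bar>") (auto simp: max_def split: if_splits)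

lemma wD_comp:
  assumes "\<And>v. h (-v) = - h v"
  shows "wD (\<lambda>i. h (w i)) i = h (wD w i)"
  unfolding wD_def using assms by auto

lemma wD_pair:
  assumes "w \<in> signed_perms n" "2 \<le> n" "i < n"
  shows "\<exists>j. 1 \<le> j \<and> j < int n \<and> \<bar>wD w i\<bar> \<noteq> \<bar>wD w (Suc i)\<bar> \<and>
     max \<bar>wD w i\<bar> \<bar>wD w (Suc i)\<bar> = max \<bar>w j\<bar> \<bar>w (j+1)\<bar> \<and> 1 \<le> \<bar>wD w i\<bar> \<and> 1 \<le> \<bar>wD w (Suc i)\<bar>"
proof (cases "i = 0")
  case True
  have a: "\<bar>w 1\<bar> \<noteq> \<bar>w 2\<bar>" using sp_absinj[OF assms(1), of 1 2] assms by auto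
  have "1 \<le> \<bar>w 1\<bar>" "1 \<le> \<bar>w 2\<bar>" using sp_range[OF assms(1), of 1] sp_range[OF assms(1), of 2] assms by auto
  then show ?thesis using True a assms by (intro exI[of _ 1]) (auto simp: wD_def max_def)
next
  case False
  have a: "\<bar>w (int i)\<bar> \<noteq> \<bar>w (int i + 1)\<bar>" using sp_absinj[OF assms(1), of "int i" "int i + 1"] assms False by auto
  have "1 \<le> \<bar>w (int i)\<bar>" "1 \<le> \<bar>w (int i + 1)\<bar>"
    using sp_range[OF assms(1), of "int i"] sp_range[OF assms(1), of "int i + 1"] assms False by auto
  then show ?thesis using False a assms by (intro exI[of _ "int i"]) (auto simp: wD_def add.commute)
qed

lemma descD_gK:
  assumes "w \<in> signed_perms n" "2 \<le> n"
    "\<And>j. 1 \<le> j \<Longrightarrow> j < int n \<Longrightarrow> max \<bar>w j\<bar> \<bar>w (j+1)\<bar> \<notin> K"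
  shows "descD n (\<lambda>i. gK K (w i)) = descD n w"
proof -
  have "(wD (\<lambda>i. gK K (w i)) i > wD (\<lambda>i. gK K (w i)) (Suc i)) = (wD w i > wD w (Suc i))" if i: "i < n" for i
  proof -
    obtain j where j: "1 \<le> j" "j < int n" "\<bar>wD w i\<bar> \<noteq> \<bar>wD w (Suc i)\<bar>"
      "max \<bar>wD w i\<bar> \<bar>wD w (Suc i)\<bar> = max \<bar>w j\<bar> \<bar>w (j+1)\<bar>"
      using wD_pair[OF assms(1,2) i] by blast
    show ?thesis unfolding wD_comp[of "gK K", OF gK_odd]
      by (rule key_cmp) (use j assms(3)[of j] in auto)
  qed
  then show ?thesis unfolding descD_def by auto
qed

lemma Tm_props_ne:
  assumes "w \<in> even_signed_perms n" "2 \<le> n" "VS n w \<noteq> {}"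
  shows "Tm n w \<in> even_signed_perms n \<and> descD n (Tm n w) = descD n w \<and> Tm n (Tm n w) = w \<and> Tm n w \<noteq> w"
proof -
  have w: "w \<in> signed_perms n" "even (card (negs n w))" using assms esp_iff by auto
  note False = assms(3)
    define k where "k = Min (VS n w)"
    have kV: "k \<in> VS n w" unfolding k_def using False VS_finite by auto
    then have k: "2 \<le> k" "k \<le> int n" "\<And>i. 1 \<le> i \<Longrightarrow> i < int n \<Longrightarrow> max \<bar>w i\<bar> \<bar>w (i+1)\<bar> \<noteq> k"
      unfolding VS_def validk_def by auto
    have T: "Tm n w = (\<lambda>i. gK {1, k} (w i))" using False unfolding Tm_def k_def by simp
    have sp: "(\<lambda>i. gK {1, k} (w i)) \<in> signed_perms n"
      by (rule comp_sp[OF w(1)]) (use k in \<open>auto simp: gK_def\<close>)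
    have "card (negs n (\<lambda>i. gK {1, k} (w i))) mod 2 = (card (negs n w) + card {1, k}) mod 2"
      by (rule negs_flip[OF w(1)]) (use k sp_range[OF w(1)] in \<open>auto simp: gK_def\<close>)
    then have "even (card (negs n (\<lambda>i. gK {1, k} (w i))))" using w(2) k by auto
    then have G1: "Tm n w \<in> even_signed_perms n" using sp T esp_iff by auto
    have "max \<bar>w j\<bar> \<bar>w (j+1)\<bar> \<notin> {1, k}" if "1 \<le> j" "j < int n" for j
    proof -
      have "\<bar>w j\<bar> \<noteq> \<bar>w (j+1)\<bar>" using sp_absinj[OF w(1), of j "j+1"] that by auto
      moreover have "1 \<le> \<bar>w j\<bar>" "1 \<le> \<bar>w (j+1)\<bar>" using sp_range[OF w(1), of j] sp_range[OF w(1), of "j+1"] that by auto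
      ultimately have "max \<bar>w j\<bar> \<bar>w (j+1)\<bar> \<noteq> 1" by (auto simp: max_def)
      then show ?thesis using k(3)[OF that] by auto
    qed
    then have G2: "descD n (Tm n w) = descD n w" unfolding T by (rule descD_gK[OF w(1) assms(2)])
    have "VS n (Tm n w) = VS n w" unfolding T by (rule VS_gK)
    then have G3: "Tm n (Tm n w) = w" using False T unfolding Tm_def k_def by (simp add: fun_eq_iff)
    obtain p where p: "1 \<le> p" "p \<le> int n" "\<bar>w p\<bar> = 1" using sp_abssurj[OF w(1), of 1] assms by auto
    then have "Tm n w p \<noteq> w p" unfolding T gK_def by auto
    then have "Tm n w \<noteq> w" by auto
    with G1 G2 G3 show ?thesis by blast
qed

lemma Tm_props:
  assumes "w \<in> even_signed_perms n" "2 \<le> n"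
  shows "Tm n w \<in> even_signed_perms n" "descD n (Tm n w) = descD n w" "Tm n (Tm n w) = w"
    "Tm n w = w \<longleftrightarrow> VS n w = {}"
  using Tm_props_ne[OF assms] assms by (cases "VS n w = {}"; simp add: Tm_def)+

lemma step1:
  assumes "2 \<le> n"
  shows "card {w\<in>even_signed_perms n. descD n w = S} mod 2
       = card {w\<in>even_signed_perms n. descD n w = S \<and> VS n w = {}} mod 2"
proof -
  have "card {w\<in>even_signed_perms n. descD n w = S} mod 2
      = card {w\<in>{w\<in>even_signed_perms n. descD n w = S}. Tm n w = w} mod 2"
    by (rule inv_parity) (use esp_finite Tm_props[OF _ assms] in auto)
  moreover have "{w\<in>{w\<in>even_signed_perms n. descD n w = S}. Tm n w = w}
      = {w\<in>even_signed_perms n. descD n w = S \<and> VS n w = {}}"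
    using Tm_props[OF _ assms] by auto
  ultimately show ?thesis by simp
qed




definition posv :: "nat \<Rightarrow> (int \<Rightarrow> int) \<Rightarrow> int \<Rightarrow> bool" where
  "posv n w v \<longleftrightarrow> (\<exists>i. 1 \<le> i \<and> i \<le> int n \<and> w i = v)"

definition agree :: "nat \<Rightarrow> (int \<Rightarrow> int) \<Rightarrow> bool" where
  "agree n w \<longleftrightarrow> (posv n w 1 \<longleftrightarrow> posv n w 2)"

definition hv :: "bool \<Rightarrow> int \<Rightarrow> int" where
  "hv a v = (if \<bar>v\<bar> \<in> {1,2} then (if a then - (sgn v * (3 - \<bar>v\<bar>)) else sgn v * (3 - \<bar>v\<bar>)) else v)"

definition Hm :: "nat \<Rightarrow> (int \<Rightarrow> int) \<Rightarrow> (int \<Rightarrow> int)" where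
  "Hm n w = (\<lambda>i. hv (agree n w) (w i))"

lemma abs12: "\<bar>v::int\<bar> \<in> {1,2} \<longleftrightarrow> v \<in> {-2,-1,1,2}" by auto

lemma hv_odd: "hv a (-v) = - hv a v"
  unfolding hv_def by (simp add: sgn_minus)

lemma hv_inv[simp]: "hv a (hv a v) = v"
proof (cases "\<bar>v\<bar> \<in> {1,2}")
  case True
  then have "v \<in> {-2,-1,1,2}" by (simp only: abs12)
  then show ?thesis by (cases a) (auto simp: hv_def)
next
  case False then show ?thesis by (simp add: hv_def)
qed

lemma hv_abs: "\<bar>v\<bar> \<in> {1,2} \<Longrightarrow> \<bar>hv a v\<bar> = 3 - \<bar>v\<bar>"
  by (subst (asm) abs12) (cases a; auto simp: hv_def)

lemma hv_cmp:
  assumes "\<bar>x\<bar> \<noteq> \<bar>y\<bar>" "x \<noteq> 0" "y \<noteq> 0"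
    "\<bar>x\<bar> \<in> {1,2} \<Longrightarrow> \<bar>y\<bar> \<in> {1,2} \<Longrightarrow> (a \<longleftrightarrow> (x > 0 \<longleftrightarrow> y > 0))"
  shows "(hv a x < hv a y) = (x < y)"
proof (cases "\<bar>x\<bar> \<in> {1,2}")
  case True
  note xt = True
  then have x: "x \<in> {-2,-1,1,2}" by (simp only: abs12)
  show ?thesis
  proof (cases "\<bar>y\<bar> \<in> {1,2}")
    case True
    then have "y \<in> {-2,-1,1,2}" by (simp only: abs12)
    then show ?thesis using x assms(1) assms(4)[OF xt True] by (cases a) (auto simp: hv_def)
  next
    case False
    then have "\<bar>y\<bar> \<ge> 3" using assms(3) by auto
    then show ?thesis using x False by (cases a) (auto simp: hv_def)
  qed
next
  case False
  then have xx: "\<bar>x\<bar> \<ge> 3" using assms(2) by auto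
  show ?thesis
  proof (cases "\<bar>y\<bar> \<in> {1,2}")
    case True
    then have "y \<in> {-2,-1,1,2}" by (simp only: abs12)
    then show ?thesis using xx False by (cases a) (auto simp: hv_def)
  next
    case False2: False
    then show ?thesis using False by (simp add: hv_def)
  qed
qed

lemma hv_sign:
  assumes "v \<noteq> 0"
  shows "(hv a v < 0) = (if a \<and> \<bar>v\<bar> \<in> {1,2} then \<not> v < 0 else v < 0)"
proof (cases "\<bar>v\<bar> \<in> {1,2}")
  case True
  then have "v \<in> {-2,-1,1,2}" by (simp only: abs12)
  then show ?thesis by (cases a) (auto simp: hv_def)
next
  case False then show ?thesis by (simp add: hv_def)
qed

lemma posv_iff:
  assumes "w \<in> signed_perms n" "1 \<le> p" "p \<le> int n" "\<bar>w p\<bar> = \<bar>v\<bar>"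
  shows "posv n w v \<longleftrightarrow> w p = v"
proof
  assume "posv n w v"
  then obtain j where j: "1 \<le> j" "j \<le> int n" "w j = v" unfolding posv_def by auto
  then have "j = p" using sp_absinj[OF assms(1), of j p] assms by auto
  then show "w p = v" using j by simp
next
  assume "w p = v" then show "posv n w v" unfolding posv_def using assms by auto
qed

lemma sp_nz: assumes "w \<in> signed_perms n" "1 \<le> i" "i \<le> int n" shows "w i \<noteq> 0"
  using sp_range[OF assms] by auto

lemma Hm_sp:
  assumes "w \<in> signed_perms n" "2 \<le> n"
  shows "Hm n w \<in> signed_perms n"
  unfolding Hm_def
proof (rule comp_sp[OF assms(1)])
  show "hv (agree n w) (- v) = - hv (agree n w) v" for v by (rule hv_odd)
  show "hv (agree n w) v \<in> {- int n..int n} - {0} \<and> hv (agree n w) (hv (agree n w) v) = v"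
    if "v \<in> {- int n..int n} - {0}" for v
  proof (cases "\<bar>v\<bar> \<in> {1,2}")
    case True
    then show ?thesis using hv_abs[OF True, of "agree n w"] assms(2) by auto
  next
    case False then show ?thesis using that by (simp add: hv_def)
  qed
  show "hv (agree n w) v = v" if "int n < \<bar>v\<bar>" for v using that assms(2) by (auto simp: hv_def)
qed

lemma posv_Hm:
  assumes "w \<in> signed_perms n" "u \<noteq> 0"
  shows "posv n (Hm n w) u = posv n w (hv (agree n w) u)"
  unfolding posv_def Hm_def by (metis hv_inv)

lemma agree_Hm:
  assumes "w \<in> signed_perms n" "2 \<le> n"
  shows "agree n (Hm n w) = agree n w"
proof -
  have neg: "posv n w (-v) \<longleftrightarrow> \<not> posv n w v" if v: "1 \<le> v" "v \<le> int n" for v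
  proof -
    obtain p where p: "1 \<le> p" "p \<le> int n" "\<bar>w p\<bar> = v" using sp_abssurj[OF assms(1) v] by auto
    have A: "posv n w v \<longleftrightarrow> w p = v" by (rule posv_iff[OF assms(1) p(1,2)]) (use p v in simp)
    have B: "posv n w (-v) \<longleftrightarrow> w p = -v" by (rule posv_iff[OF assms(1) p(1,2)]) (use p v in simp)
    show ?thesis using A B v p by auto
  qed
  show ?thesis
  proof (cases "agree n w")
    case True
    have "hv True 1 = -2" "hv True 2 = -1" by (auto simp: hv_def)
    then show ?thesis unfolding agree_def using True posv_Hm[OF assms(1), of 1] posv_Hm[OF assms(1), of 2]
        neg[of 1] neg[of 2] assms(2) by (auto simp: agree_def)
  next
    case False
    have "hv False 1 = 2" "hv False 2 = 1" by (auto simp: hv_def)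
    then show ?thesis unfolding agree_def using False posv_Hm[OF assms(1), of 1] posv_Hm[OF assms(1), of 2]
        by (auto simp: agree_def)
  qed
qed

lemma Hm_props:
  assumes "w \<in> even_signed_perms n" "2 \<le> n"
  shows "Hm n w \<in> even_signed_perms n \<and> descD n (Hm n w) - {0} = descD n w - {0} \<and> Hm n (Hm n w) = w \<and> Hm n w \<noteq> w"
proof -
  have w: "w \<in> signed_perms n" "even (card (negs n w))" using assms esp_iff by auto
  have sp: "Hm n w \<in> signed_perms n" by (rule Hm_sp[OF w(1) assms(2)])
  have ev: "even (card (negs n (Hm n w)))"
  proof (cases "agree n w")
    case True
    have "card (negs n (\<lambda>i. hv True (w i))) mod 2 = (card (negs n w) + card {1, 2::int}) mod 2"
    proof (rule negs_flip[OF w(1)])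
      fix i :: int assume i: "1 \<le> i" "i \<le> int n"
      have "w i \<noteq> 0" using sp_nz[OF w(1) i] .
      then show "(hv True (w i) < 0) = ((w i < 0) \<noteq> (\<bar>w i\<bar> \<in> {1, 2}))"
        using hv_sign[of "w i" True] by auto
    qed (use assms(2) in auto)
    then show ?thesis using w(2) True unfolding Hm_def by (simp add: even_iff_mod_2_eq_zero)
  next
    case False
    have "negs n (Hm n w) = negs n w" unfolding negs_def Hm_def using False
      hv_sign[of _ False] sp_nz[OF w(1)] by auto
    then show ?thesis using w(2) by simp
  qed
  have d: "descD n (Hm n w) - {0} = descD n w - {0}"
  proof -
    have "(wD (Hm n w) i > wD (Hm n w) (Suc i)) = (wD w i > wD w (Suc i))" if i: "1 \<le> i" "i < n" for i
    proof -
      define x where "x = w (int i)"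
      define y where "y = w (int i + 1)"
      have e: "wD (Hm n w) i = hv (agree n w) x" "wD (Hm n w) (Suc i) = hv (agree n w) y"
        "wD w i = x" "wD w (Suc i) = y" using i unfolding x_def y_def wD_def Hm_def by (auto simp: add.commute)
      have r: "1 \<le> int i" "int i \<le> int n" "1 \<le> int i + 1" "int i + 1 \<le> int n" using i by auto
      have xy: "\<bar>x\<bar> \<noteq> \<bar>y\<bar>" using sp_absinj[OF w(1) r] unfolding x_def y_def by auto
      have "(hv (agree n w) y < hv (agree n w) x) = (y < x)"
      proof (rule hv_cmp)
        show "\<bar>y\<bar> \<noteq> \<bar>x\<bar>" using xy by auto
        show "y \<noteq> 0" "x \<noteq> 0" using sp_nz[OF w(1) r(1,2)] sp_nz[OF w(1) r(3,4)] x_def y_def by auto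
        assume a: "\<bar>y\<bar> \<in> {1,2}" "\<bar>x\<bar> \<in> {1,2}"
        then have c: "(\<bar>x\<bar> = 1 \<and> \<bar>y\<bar> = 2) \<or> (\<bar>x\<bar> = 2 \<and> \<bar>y\<bar> = 1)" using xy by auto
        then show "agree n w = (0 < y \<longleftrightarrow> 0 < x)"
        proof
          assume c1: "\<bar>x\<bar> = 1 \<and> \<bar>y\<bar> = 2"
          have "posv n w 1 \<longleftrightarrow> x = 1" using posv_iff[OF w(1) r(1,2)] c1 x_def by auto
          moreover have "posv n w 2 \<longleftrightarrow> y = 2" using posv_iff[OF w(1) r(3,4)] c1 y_def by auto
          ultimately show ?thesis unfolding agree_def using c1 by auto
        next
          assume c1: "\<bar>x\<bar> = 2 \<and> \<bar>y\<bar> = 1"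
          have "posv n w 2 \<longleftrightarrow> x = 2" using posv_iff[OF w(1) r(1,2)] c1 x_def by auto
          moreover have "posv n w 1 \<longleftrightarrow> y = 1" using posv_iff[OF w(1) r(3,4)] c1 y_def by auto
          ultimately show ?thesis unfolding agree_def using c1 by auto
        qed
      qed
      then show ?thesis unfolding e .
    qed
    then show ?thesis unfolding descD_def by auto
  qed
  have "Hm n (Hm n w) = w" unfolding Hm_def agree_Hm[OF w(1) assms(2), unfolded Hm_def] by simp
  moreover have "Hm n w \<noteq> w"
  proof -
    obtain p where p: "1 \<le> p" "p \<le> int n" "\<bar>w p\<bar> = 1" using sp_abssurj[OF w(1), of 1] assms by auto
    then have "\<bar>Hm n w p\<bar> = 2" unfolding Hm_def using hv_abs[of "w p"] by auto
    then show ?thesis using p by auto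
  qed
  ultimately show ?thesis using sp ev d esp_iff by auto
qed

lemma step2:
  assumes "2 \<le> n"
  shows "even (card {w\<in>even_signed_perms n. descD n w - {0} = T})"
proof -
  have "card {w\<in>even_signed_perms n. descD n w - {0} = T} mod 2
      = card {w\<in>{w\<in>even_signed_perms n. descD n w - {0} = T}. Hm n w = w} mod 2"
    by (rule inv_parity) (use esp_finite Hm_props[OF _ assms] in auto)
  moreover have "{w\<in>{w\<in>even_signed_perms n. descD n w - {0} = T}. Hm n w = w} = {}"
    using Hm_props[OF _ assms] by auto
  ultimately show ?thesis by (simp only: even_iff_mod_2_eq_zero) simp
qed



lemma descD_mem: "i < n \<Longrightarrow> i \<in> descD n w \<longleftrightarrow> wD w i > wD w (Suc i)"
  unfolding descD_def by auto

lemma wD_pos: "1 \<le> i \<Longrightarrow> wD w i = w (int i)" unfolding wD_def by auto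
lemma wD_Suc: "wD w (Suc i) = w (int i + 1)" unfolding wD_def by (simp add: add.commute)

lemma abs_order12:
  assumes "w \<in> signed_perms n" "2 \<le> n" "0 \<in> descD n w \<longleftrightarrow> 1 \<in> descD n w"
  shows "\<bar>w 1\<bar> < \<bar>w 2\<bar>"
proof -
  have a: "\<bar>w 1\<bar> \<noteq> \<bar>w 2\<bar>" using sp_absinj[OF assms(1), of 1 2] assms by auto
  have nz: "w 1 \<noteq> 0" using sp_nz[OF assms(1), of 1] assms by auto
  have d0: "0 \<in> descD n w \<longleftrightarrow> - w 2 > w 1" using descD_mem[of 0 n w] assms by (simp add: wD_def)
  have d1: "1 \<in> descD n w \<longleftrightarrow> w 1 > w 2" using descD_mem[of 1 n w] assms by (simp add: wD_def)
  show ?thesis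
  proof (rule ccontr)
    assume "\<not> ?thesis"
    then have "\<bar>w 1\<bar> > \<bar>w 2\<bar>" using a by auto
    then show False using assms(3) d0 d1 nz by (auto simp: abs_if split: if_splits)
  qed
qed

lemma fix_inj:
  assumes "w \<in> signed_perms n" "2 \<le> n" "VS n w = {}"
  shows "inj_on (\<lambda>j. max \<bar>w j\<bar> \<bar>w (j+1)\<bar>) {1..<int n}"
proof -
  let ?f = "\<lambda>j. max \<bar>w j\<bar> \<bar>w (j+1)\<bar>"
  have "?f ` {1..<int n} = {2..int n}"
  proof
    show "?f ` {1..<int n} \<subseteq> {2..int n}"
    proof
      fix k assume "k \<in> ?f ` {1..<int n}"
      then obtain j where j: "1 \<le> j" "j < int n" "k = ?f j" by auto
      have "\<bar>w j\<bar> \<noteq> \<bar>w (j+1)\<bar>" using sp_absinj[OF assms(1), of j "j+1"] j by auto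
      moreover have "1 \<le> \<bar>w j\<bar> \<and> \<bar>w j\<bar> \<le> int n" "1 \<le> \<bar>w (j+1)\<bar> \<and> \<bar>w (j+1)\<bar> \<le> int n"
        using sp_range[OF assms(1), of j] sp_range[OF assms(1), of "j+1"] j by auto
      ultimately show "k \<in> {2..int n}" using j(3) by (auto simp: max_def)
    qed
    show "{2..int n} \<subseteq> ?f ` {1..<int n}"
    proof
      fix k assume k: "k \<in> {2..int n}"
      then have "\<not> validk n w k" using assms(3) unfolding VS_def by auto
      then obtain j where "1 \<le> j" "j < int n" "?f j = k" using k unfolding validk_def by auto
      then show "k \<in> ?f ` {1..<int n}" by force
    qed
  qed
  moreover have "card {2..int n} = card {1..<int n}" by simp
  ultimately show ?thesis by (intro eq_card_imp_inj_on) auto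
qed

lemma fix_incr:
  assumes "w \<in> signed_perms n" "2 \<le> n" "VS n w = {}" "\<bar>w 1\<bar> < \<bar>w 2\<bar>"
  shows "m + 2 \<le> n \<Longrightarrow> \<bar>w (int m + 1)\<bar> < \<bar>w (int m + 2)\<bar>"
proof (induction m)
  case 0 then show ?case using assms(4) by simp
next
  case (Suc m)
  have IH: "\<bar>w (int m + 1)\<bar> < \<bar>w (int m + 2)\<bar>" using Suc by simp
  have ne: "\<bar>w (int m + 2)\<bar> \<noteq> \<bar>w (int m + 3)\<bar>" using sp_absinj[OF assms(1), of "int m + 2" "int m + 3"] Suc.prems by auto
  have "\<bar>w (int m + 2)\<bar> < \<bar>w (int m + 3)\<bar>"
  proof (rule ccontr)
    assume "\<not> \<bar>w (int m + 2)\<bar> < \<bar>w (int m + 3)\<bar>"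
    then have lt: "\<bar>w (int m + 3)\<bar> < \<bar>w (int m + 2)\<bar>" using ne by auto
    have "max \<bar>w (int m + 1)\<bar> \<bar>w (int m + 1 + 1)\<bar> = max \<bar>w (int m + 2)\<bar> \<bar>w (int m + 2 + 1)\<bar>"
      using IH lt by (simp add: max_def add.assoc)
    then have "int m + 1 = int m + 2"
      using inj_onD[OF fix_inj[OF assms(1-3)], of "int m + 1" "int m + 2"] Suc.prems by auto
    then show False by simp
  qed
  then show ?case by (simp add: ac_simps)
qed

lemma fix_id:
  assumes "w \<in> signed_perms n" "2 \<le> n" "VS n w = {}" "\<bar>w 1\<bar> < \<bar>w 2\<bar>"
  shows "1 \<le> i \<Longrightarrow> i \<le> int n \<Longrightarrow> \<bar>w i\<bar> = i"
proof -
  have inc: "\<bar>w j\<bar> < \<bar>w (j+1)\<bar>" if "1 \<le> j" "j < int n" for j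
    using fix_incr[OF assms, of "nat (j - 1)"] that by (simp add: add.commute)
  have lo: "int m \<le> \<bar>w (int m)\<bar>" if "1 \<le> m" "m \<le> n" for m
    using that
  proof (induction m rule: dec_induct)
    case base then show ?case using sp_range[OF assms(1), of 1] assms(2) by simp
  next
    case (step m) then show ?case using inc[of "int m"] by (simp add: add.commute)
  qed
  have hi: "\<bar>w (int n - int d)\<bar> \<le> int n - int d" if "d < n" for d
    using that
  proof (induction d)
    case 0 then show ?case using sp_range[OF assms(1), of "int n"] by simp
  next
    case (Suc d)
    have e: "int n - int (Suc d) = int n - int d - 1" by simp
    have IH: "\<bar>w (int n - int d)\<bar> \<le> int n - int d" using Suc.IH Suc.prems by simp
    have "\<bar>w (int n - int d - 1)\<bar> < \<bar>w (int n - int d - 1 + 1)\<bar>" using inc[of "int n - int d - 1"] Suc.prems by simp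
    then show ?case unfolding e using IH by simp
  qed
  assume i: "1 \<le> i" "i \<le> int n"
  have "i \<le> \<bar>w i\<bar>" using lo[of "nat i"] i by simp
  moreover have "\<bar>w i\<bar> \<le> i" using hi[of "n - nat i"] i by (simp add: of_nat_diff)
  ultimately show "\<bar>w i\<bar> = i" using i by simp
qed


lemma sign_desc:
  assumes "w \<in> signed_perms n" "\<And>i. 1 \<le> i \<Longrightarrow> i \<le> int n \<Longrightarrow> \<bar>w i\<bar> = i" "2 \<le> i" "i \<le> int n"
  shows "w i < 0 \<longleftrightarrow> nat (i - 1) \<in> descD n w"
proof -
  define m where "m = nat (i - 1)"
  have m: "1 \<le> m" "m < n" "int m = i - 1" using assms(3,4) unfolding m_def by auto
  have "m \<in> descD n w \<longleftrightarrow> w (i - 1) > w i"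
    using descD_mem[OF m(2), of w] wD_pos[OF m(1), of w] wD_Suc[of w m] m(3) by simp
  moreover have "\<bar>w (i - 1)\<bar> = i - 1" "\<bar>w i\<bar> = i" using assms(2)[of "i - 1"] assms(2)[of i] assms(3,4) by auto
  ultimately show ?thesis unfolding m_def by (auto simp: abs_if split: if_splits)
qed

lemma fix_unique:
  assumes "2 \<le> n" "w \<in> even_signed_perms n" "w' \<in> even_signed_perms n"
    "descD n w = S" "descD n w' = S" "VS n w = {}" "VS n w' = {}" "0 \<in> S \<longleftrightarrow> 1 \<in> S"
  shows "w = w'"
proof -
  have w: "w \<in> signed_perms n" "even (card (negs n w))" using assms esp_iff by auto
  have w': "w' \<in> signed_perms n" "even (card (negs n w'))" using assms esp_iff by auto
  have id: "\<bar>w i\<bar> = i" if "1 \<le> i" "i \<le> int n" for i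
    using fix_id[OF w(1) assms(1,6) abs_order12[OF w(1) assms(1)]] assms(4,8) that by auto
  have id': "\<bar>w' i\<bar> = i" if "1 \<le> i" "i \<le> int n" for i
    using fix_id[OF w'(1) assms(1,7) abs_order12[OF w'(1) assms(1)]] assms(5,8) that by auto
  have eq2: "w i = w' i" if "2 \<le> i" "i \<le> int n" for i
  proof -
    have "w i < 0 \<longleftrightarrow> w' i < 0" using sign_desc[OF w(1) id that] sign_desc[OF w'(1) id' that] assms(4,5) by simp
    moreover have "\<bar>w i\<bar> = \<bar>w' i\<bar>" using id id' that by simp
    ultimately show ?thesis by (auto simp: abs_if split: if_splits)
  qed
  define N where "N = {i\<in>{2..int n}. w i < 0}"
  have fN: "finite N" unfolding N_def by (rule finite_subset[of _ "{2..int n}"]) auto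
  have x12: "\<And>x::int. 1 \<le> x \<Longrightarrow> x = 1 \<or> 2 \<le> x" by auto
  have nw: "negs n w = (if w 1 < 0 then insert 1 N else N)" unfolding negs_def N_def using assms(1) by (auto dest: x12)
  have nw': "negs n w' = (if w' 1 < 0 then insert 1 N else N)" unfolding negs_def N_def using eq2 assms(1) by (auto dest: x12)
  have "1 \<notin> N" unfolding N_def by auto
  have eq1: "w 1 = w' 1"
  proof (rule ccontr)
    assume ne: "w 1 \<noteq> w' 1"
    have "\<bar>w 1\<bar> = 1" "\<bar>w' 1\<bar> = 1" using id id' assms(1) by auto
    then have "(w 1 < 0) \<noteq> (w' 1 < 0)" using ne by (auto simp: abs_if split: if_splits)
    then show False using w(2) w'(2) nw nw' fN \<open>1 \<notin> N\<close> by (auto split: if_splits)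
  qed
  show ?thesis
  proof (rule sp_ext[OF w(1) w'(1)])
    fix i :: int assume "1 \<le> i" "i \<le> int n"
    then show "w i = w' i" using eq1 eq2 by (cases "i = 1") auto
  qed
qed


definition sgS :: "nat \<Rightarrow> nat set \<Rightarrow> int \<Rightarrow> int" where
  "sgS n S j = (if j = 1 then (if even (card {i\<in>{2..int n}. nat (i-1) \<in> S}) then 1 else -1)
                else if nat (j-1) \<in> S then -1 else 1)"

definition wst :: "nat \<Rightarrow> nat set \<Rightarrow> int \<Rightarrow> int" where
  "wst n S = (\<lambda>i. if 1 \<le> \<bar>i\<bar> \<and> \<bar>i\<bar> \<le> int n then sgS n S \<bar>i\<bar> * i else i)"

lemma sgS_pm: "sgS n S j = 1 \<or> sgS n S j = -1" unfolding sgS_def by auto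

lemma id_sp: "(\<lambda>i. i) \<in> signed_perms n"
  unfolding signed_perms_def by (auto simp: bij_betw_def)

lemma wst_abs: "\<bar>wst n S i\<bar> = \<bar>i\<bar>"
  unfolding wst_def using sgS_pm[of n S "\<bar>i\<bar>"] by (auto simp: abs_mult)

lemma wst_sp: "wst n S \<in> signed_perms n"
proof -
  have "(\<lambda>i. wst n S ((\<lambda>i. i) i)) \<in> signed_perms n"
  proof (rule comp_sp[OF id_sp])
    show "wst n S (- v) = - wst n S v" for v unfolding wst_def by auto
    show "wst n S v \<in> {- int n..int n} - {0} \<and> wst n S (wst n S v) = v" if "v \<in> {- int n..int n} - {0}" for v
    proof -
      have a: "\<bar>wst n S v\<bar> = \<bar>v\<bar>" by (rule wst_abs)
      have "wst n S (wst n S v) = sgS n S \<bar>v\<bar> * (sgS n S \<bar>v\<bar> * v)" using that a unfolding wst_def by auto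
      also have "\<dots> = v" using sgS_pm[of n S "\<bar>v\<bar>"] by auto
      finally show ?thesis using a that by auto
    qed
    show "wst n S v = v" if "int n < \<bar>v\<bar>" for v using that unfolding wst_def by auto
  qed
  then show ?thesis by simp
qed

lemma wst_pos: "1 \<le> i \<Longrightarrow> i \<le> int n \<Longrightarrow> wst n S i = sgS n S i * i"
  unfolding wst_def by auto

lemma sg_neg: "1 \<le> (i::int) \<Longrightarrow> (sgS n S i * i < 0) \<longleftrightarrow> sgS n S i = -1"
  using sgS_pm[of n S i] by auto

lemma wst_even: assumes "1 \<le> n" shows "even (card (negs n (wst n S)))"
proof -
  define C where "C = {i\<in>{2..int n}. nat (i-1) \<in> S}"
  have fC: "finite C" unfolding C_def by (rule finite_subset[of _ "{2..int n}"]) auto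
  have x12: "\<And>x::int. 1 \<le> x \<Longrightarrow> x = 1 \<or> 2 \<le> x" by auto
  have "negs n (wst n S) = {i\<in>{1..int n}. sgS n S i = -1}"
    unfolding negs_def using wst_pos[of _ n S] sg_neg[of _ n S] by auto
  also have "\<dots> = (if odd (card C) then insert 1 C else C)"
  proof (cases "odd (card C)")
    case True
    then show ?thesis unfolding C_def sgS_def using assms by (auto dest: x12)
  next
    case False
    then show ?thesis unfolding C_def sgS_def by (auto dest: x12)
  qed
  finally show ?thesis using fC by (auto simp: C_def)
qed


lemma wst_desc:
  assumes "2 \<le> n" "S \<subseteq> {0..<n}" "0 \<in> S \<longleftrightarrow> 1 \<in> S"
  shows "descD n (wst n S) = S"
proof -
  have "m \<in> descD n (wst n S) \<longleftrightarrow> m \<in> S" if m: "m < n" for m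
  proof (cases "m = 0")
    case True
    have s2: "sgS n S 2 = (if 1 \<in> S then -1 else 1)" unfolding sgS_def by simp
    have "wD (wst n S) 0 = - (sgS n S 2 * 2)" "wD (wst n S) (Suc 0) = sgS n S 1"
      using wst_pos[of 2 n S] wst_pos[of 1 n S] assms(1) unfolding wD_def by auto
    then have "0 \<in> descD n (wst n S) \<longleftrightarrow> - (sgS n S 2 * 2) > sgS n S 1" using descD_mem[of 0 n] m True by simp
    also have "\<dots> \<longleftrightarrow> 1 \<in> S" using s2 sgS_pm[of n S 1] by auto
    finally show ?thesis using True assms(3) by simp
  next
    case False
    have s: "sgS n S (int m + 1) = (if m \<in> S then -1 else 1)" unfolding sgS_def using False by simp
    have "wD (wst n S) m = sgS n S (int m) * int m" "wD (wst n S) (Suc m) = sgS n S (int m + 1) * (int m + 1)"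
      using wst_pos[of "int m" n S] wst_pos[of "int m + 1" n S] False m wD_pos[of m "wst n S"] wD_Suc[of "wst n S" m] by auto
    then have "m \<in> descD n (wst n S) \<longleftrightarrow> sgS n S (int m) * int m > sgS n S (int m + 1) * (int m + 1)"
      using descD_mem[of m n] m by simp
    also have "\<dots> \<longleftrightarrow> m \<in> S" using s sgS_pm[of n S "int m"] by auto
    finally show ?thesis .
  qed
  moreover have "descD n (wst n S) \<subseteq> {0..<n}" unfolding descD_def by auto
  ultimately show ?thesis using assms(2) by auto
qed

lemma wst_VS: "VS n (wst n S) = {}"
proof -
  have "\<not> validk n (wst n S) k" for k
  proof
    assume v: "validk n (wst n S) k"
    then have k: "2 \<le> k" "k \<le> int n" unfolding validk_def by auto
    have "max \<bar>wst n S (k - 1)\<bar> \<bar>wst n S (k - 1 + 1)\<bar> = k" using k by (simp add: wst_abs)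
    moreover have "\<forall>i. 1 \<le> i \<and> i < int n \<longrightarrow> max \<bar>wst n S i\<bar> \<bar>wst n S (i + 1)\<bar> \<noteq> k"
      using v unfolding validk_def by blast
    then have "1 \<le> k - 1 \<and> k - 1 < int n \<longrightarrow> max \<bar>wst n S (k - 1)\<bar> \<bar>wst n S (k - 1 + 1)\<bar> \<noteq> k"
      by (rule spec)
    ultimately show False using k by linarith
  qed
  then show ?thesis unfolding VS_def by auto
qed

lemma fix_card:
  assumes "2 \<le> n" "S \<subseteq> {0..<n}" "0 \<in> S \<longleftrightarrow> 1 \<in> S"
  shows "card {w\<in>even_signed_perms n. descD n w = S \<and> VS n w = {}} = 1"
proof -
  have "wst n S \<in> even_signed_perms n" using wst_sp wst_even[of n S] assms(1) esp_iff by auto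
  then have "{w\<in>even_signed_perms n. descD n w = S \<and> VS n w = {}} = {wst n S}"
    using wst_desc[OF assms] wst_VS fix_unique[OF assms(1) _ _ _ _ _ _ assms(3)] by blast
  then show ?thesis by simp
qed

lemma main_odd:
  assumes "2 \<le> n" "S \<subseteq> {0..<n}"
  shows "odd (card {w\<in>even_signed_perms n. descD n w = S})"
proof -
  have caseB: "odd (card {w\<in>even_signed_perms n. descD n w = S'})" if "S' \<subseteq> {0..<n}" "0 \<in> S' \<longleftrightarrow> 1 \<in> S'" for S'
    using step1[OF assms(1), of S'] fix_card[OF assms(1) that] by (simp add: odd_iff_mod_2_eq_one)
  show ?thesis
  proof (cases "0 \<in> S \<longleftrightarrow> 1 \<in> S")
    case True then show ?thesis using caseB assms(2) by simp
  next
    case False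
    define S0 where "S0 = (if 0 \<in> S then S - {0} else insert 0 S)"
    have S0: "S0 \<subseteq> {0..<n}" "0 \<in> S0 \<longleftrightarrow> 1 \<in> S0" using False assms unfolding S0_def by auto
    have o: "odd (card {w\<in>even_signed_perms n. descD n w = S0})" by (rule caseB[OF S0])
    have ds: "descD n w \<subseteq> {0..<n}" for w unfolding descD_def by auto
    have U: "{w\<in>even_signed_perms n. descD n w - {0} = S - {0}}
        = {w\<in>even_signed_perms n. descD n w = S} \<union> {w\<in>even_signed_perms n. descD n w = S0}"
    proof (rule set_eqI, rule iffI)
      fix w assume "w \<in> {w\<in>even_signed_perms n. descD n w - {0} = S - {0}}"
      then have w: "w \<in> even_signed_perms n" "descD n w - {0} = S - {0}" by auto
      have "descD n w = S \<or> descD n w = S0"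
      proof (cases "0 \<in> descD n w \<longleftrightarrow> 0 \<in> S")
        case True then have "descD n w = S" using w(2) by blast
        then show ?thesis by simp
      next
        case False then have "descD n w = S0" using w(2) unfolding S0_def by auto
        then show ?thesis by simp
      qed
      then show "w \<in> {w\<in>even_signed_perms n. descD n w = S} \<union> {w\<in>even_signed_perms n. descD n w = S0}"
        using w(1) by auto
    next
      fix w assume "w \<in> {w\<in>even_signed_perms n. descD n w = S} \<union> {w\<in>even_signed_perms n. descD n w = S0}"
      then show "w \<in> {w\<in>even_signed_perms n. descD n w - {0} = S - {0}}" unfolding S0_def by (auto split: if_splits)
    qed
    have disj: "{w\<in>even_signed_perms n. descD n w = S} \<inter> {w\<in>even_signed_perms n. descD n w = S0} = {}"
      unfolding S0_def by auto
    have "even (card {w\<in>even_signed_perms n. descD n w = S} + card {w\<in>even_signed_perms n. descD n w = S0})"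
      using step2[OF assms(1), of "S - {0}"] unfolding U
      by (subst card_Un_disjoint[symmetric]) (use esp_finite disj in auto)
    then show ?thesis using o by simp
  qed
qed


lemma pc_desc:
  assumes "pseudo_comp n \<alpha>"
  shows "desc_comp \<alpha> \<subseteq> {0..<n}"
proof
  fix x assume "x \<in> desc_comp \<alpha>"
  then obtain k where k: "1 \<le> k" "k < length \<alpha>" "x = sum_list (take k \<alpha>)" unfolding desc_comp_def by auto
  have "\<alpha> ! k = tl \<alpha> ! (k - 1)" using k by (cases \<alpha>) auto
  moreover have "k - 1 < length (tl \<alpha>)" using k by auto
  ultimately have "\<alpha> ! k \<in> set (tl \<alpha>)" by (metis nth_mem)
  then have pos: "\<alpha> ! k > 0" using assms unfolding pseudo_comp_def by auto
  have "\<alpha> ! k \<in> set (drop k \<alpha>)" using k by (metis Cons_nth_drop_Suc list.set_intros(1))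
  then have "\<alpha> ! k \<le> sum_list (drop k \<alpha>)" by (rule member_le_sum_list) auto
  moreover have "sum_list \<alpha> = sum_list (take k \<alpha>) + sum_list (drop k \<alpha>)"
    by (metis append_take_drop_id sum_list_append)
  ultimately show "x \<in> {0..<n}" using k pos assms unfolding pseudo_comp_def by auto
qed

definition PC :: "nat \<Rightarrow> nat list set" where "PC n = {\<alpha>. pseudo_comp n \<alpha>}"

lemma PC_0: "PC 0 = {[0]}"
proof
  show "PC 0 \<subseteq> {[0]}"
  proof
    fix \<alpha> assume "\<alpha> \<in> PC 0"
    then obtain a r where a: "\<alpha> = a # r" "\<forall>x\<in>set r. x > 0" "a + sum_list r = 0"
      unfolding PC_def pseudo_comp_def by (cases \<alpha>) auto
    then have "r = []" by (cases r) auto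
    then show "\<alpha> \<in> {[0]}" using a by auto
  qed
  show "{[0]} \<subseteq> PC 0" unfolding PC_def pseudo_comp_def by auto
qed

lemma PC_Suc:
  "PC (Suc n) = (\<lambda>\<beta>. 0 # (hd \<beta> + 1) # tl \<beta>) ` PC n \<union> (\<lambda>\<beta>. (hd \<beta> + 1) # tl \<beta>) ` PC n"
proof
  show "PC (Suc n) \<subseteq> (\<lambda>\<beta>. 0 # (hd \<beta> + 1) # tl \<beta>) ` PC n \<union> (\<lambda>\<beta>. (hd \<beta> + 1) # tl \<beta>) ` PC n"
  proof
    fix \<alpha> assume "\<alpha> \<in> PC (Suc n)"
    then obtain a r where a: "\<alpha> = a # r" "\<forall>x\<in>set r. x > 0" "a + sum_list r = Suc n"
      unfolding PC_def pseudo_comp_def by (cases \<alpha>) auto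
    show "\<alpha> \<in> (\<lambda>\<beta>. 0 # (hd \<beta> + 1) # tl \<beta>) ` PC n \<union> (\<lambda>\<beta>. (hd \<beta> + 1) # tl \<beta>) ` PC n"
    proof (cases "a = 0")
      case True
      then obtain b r' where r: "r = b # r'" using a by (cases r) auto
      have b: "b > 0" using a r by auto
      have "(b - 1) # r' \<in> PC n" using a r b True unfolding PC_def pseudo_comp_def by auto
      moreover have "\<alpha> = (\<lambda>\<beta>. 0 # (hd \<beta> + 1) # tl \<beta>) ((b - 1) # r')" using a r b True by auto
      ultimately show ?thesis by blast
    next
      case False
      have "(a - 1) # r \<in> PC n" using a False unfolding PC_def pseudo_comp_def by auto
      moreover have "\<alpha> = (\<lambda>\<beta>. (hd \<beta> + 1) # tl \<beta>) ((a - 1) # r)" using a False by auto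
      ultimately show ?thesis by blast
    qed
  qed
  show "(\<lambda>\<beta>. 0 # (hd \<beta> + 1) # tl \<beta>) ` PC n \<union> (\<lambda>\<beta>. (hd \<beta> + 1) # tl \<beta>) ` PC n \<subseteq> PC (Suc n)"
  proof
    fix \<alpha> assume "\<alpha> \<in> (\<lambda>\<beta>. 0 # (hd \<beta> + 1) # tl \<beta>) ` PC n \<union> (\<lambda>\<beta>. (hd \<beta> + 1) # tl \<beta>) ` PC n"
    then obtain \<beta> where b: "\<beta> \<in> PC n" "\<alpha> = 0 # (hd \<beta> + 1) # tl \<beta> \<or> \<alpha> = (hd \<beta> + 1) # tl \<beta>" by blast
    then obtain c r where c: "\<beta> = c # r" "\<forall>x\<in>set r. x > 0" "c + sum_list r = n"
      unfolding PC_def pseudo_comp_def by (cases \<beta>) auto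
    show "\<alpha> \<in> PC (Suc n)" using b(2) c unfolding PC_def pseudo_comp_def by auto
  qed
qed

lemma PC_card: "finite (PC n) \<and> card (PC n) = 2 ^ n"
proof (induction n)
  case 0 then show ?case by (simp add: PC_0)
next
  case (Suc n)
  let ?f1 = "\<lambda>\<beta>::nat list. 0 # (hd \<beta> + 1) # tl \<beta>"
  let ?f2 = "\<lambda>\<beta>::nat list. (hd \<beta> + 1) # tl \<beta>"
  have ne: "\<beta> \<noteq> []" if "\<beta> \<in> PC n" for \<beta> using that unfolding PC_def pseudo_comp_def by auto
  have inj1: "inj_on ?f1 (PC n)"
  proof (rule inj_onI)
    fix x y assume "x \<in> PC n" "y \<in> PC n" "?f1 x = ?f1 y"
    then show "x = y" using ne by (metis add_right_cancel list.collapse list.inject)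
  qed
  have inj2: "inj_on ?f2 (PC n)"
  proof (rule inj_onI)
    fix x y assume "x \<in> PC n" "y \<in> PC n" "?f2 x = ?f2 y"
    then show "x = y" using ne by (metis add_right_cancel list.collapse list.inject)
  qed
  have disj: "?f1 ` PC n \<inter> ?f2 ` PC n = {}" by auto
  have "card (PC (Suc n)) = card (?f1 ` PC n) + card (?f2 ` PC n)"
    unfolding PC_Suc using Suc disj by (intro card_Un_disjoint) auto
  also have "\<dots> = 2 ^ Suc n" using card_image[OF inj1] card_image[OF inj2] Suc by simp
  finally show ?case unfolding PC_Suc using Suc by simp
qed

theorem corollary5p2:
  fixes n :: nat
  assumes "n \<ge> 4"
  shows "(\<forall>\<alpha>. pseudo_comp n \<alpha> \<longrightarrow> odd (rD n \<alpha>)) \<and> cD 2 0 n = 0 \<and> cD 2 1 n = 2 ^ n"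
proof -
  have odd: "odd (rD n \<alpha>)" if "pseudo_comp n \<alpha>" for \<alpha>
    unfolding rD_def using main_odd[of n "desc_comp \<alpha>"] pc_desc[OF that] assms by auto
  have "{\<alpha>. pseudo_comp n \<alpha> \<and> rD n \<alpha> mod 2 = 0} = {}" using odd even_iff_mod_2_eq_zero by blast
  then have c0: "cD 2 0 n = 0" unfolding cD_def by (metis card.empty)
  have m1: "rD n \<alpha> mod 2 = 1" if "pseudo_comp n \<alpha>" for \<alpha>
    using odd[OF that] odd_iff_mod_2_eq_one by blast
  have "{\<alpha>. pseudo_comp n \<alpha> \<and> rD n \<alpha> mod 2 = 1} = PC n" using m1 unfolding PC_def
    by blast
  then have c1: "cD 2 1 n = 2 ^ n" unfolding cD_def using PC_card[of n] by simp
  show ?thesis using odd c0 c1 by blast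
qed


end
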